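(* Let $f:\mathbb{R}^d\to\mathbb{R}$ be differentiable with minimum value $f^\ast$; let $L>0,\mu>0,\rho\ge1$. Assume (L-smooth) $f(x)-f(y)-\langle\nabla f(y),x-y\rangle\le\frac{L}{2}\|x-y\|^2$ for all $x,y$; (PL) $\|\nabla f(x)\|^2\ge2\mu(f(x)-f^\ast)$ for all $x$; (SGC) $\mathbb{E}_\xi[\nabla f(x,\xi)]=\nabla f(x)$ and $\mathbb{E}_\xi[\|\nabla f(x,\xi)\|^2]\le\rho\|\nabla f(x)\|^2$ for all $x$. Let $(x_t,z_t)_{t\ge0}$ be the continuized Nesterov process (see context) with $0<\gamma\le\frac{1}{\rho L}$, $\gamma'=\gamma+\sqrt{\frac{\gamma}{2\rho}}$, $\eta=\sqrt{\frac{\gamma}{2\rho}}$, $\eta'=\frac{\mu\gamma}{2}-\sqrt{\frac{\gamma}{2\rho}}$. Then for all $t\ge0$, $$\mathbb{E}[f(x_t)-f^\ast]\le e^{-\frac{\mu\gamma}{2}t}(f(x_0)-f^\ast).$$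
   Context: Stochastic gradients: $(\Xi,\mathcal{P})$ is a probability space and $\nabla f(x,\xi)$ is a measurable stochastic estimate of $\nabla f(x)$; $\mathbb{E}_\xi$ denotes integration in $\xi\sim\mathcal{P}$. Continuized Nesterov process with constant parameters $(\eta,\eta',\gamma,\gamma')$: let $T_0=0$, $T_{k+1}-T_k$ ($k\ge0$) i.i.d. exponential with parameter $1$, and $\xi_1,\xi_2,\dots$ i.i.d. with law $\mathcal{P}$, independent of the $T_k$; $N=\sum_{k\ge1}\delta_{(T_k,\xi_k)}$ is a Poisson point measure with intensity $dt\otimes\mathcal{P}$. The càdlàg process $(x_t,z_t)$ starts at $x_0=z_0$ deterministic and solves $dx_t=\eta(z_t-x_t)dt-\gamma\int_\Xi\nabla f(x_{t^-},\xi)\,dN(t,\xi)$, $dz_t=\eta'(x_t-z_t)dt-\gamma'\int_\Xi\nabla f(x_{t^-},\xi)\,dN(t,\xi)$; i.e. between jump times $\dot x=\eta(z-x)$, $\dot z=\eta'(x-z)$, and at each $T_k$ ($k\ge1$) $x_{T_k}=x_{T_k^-}-\gamma\nabla f(x_{T_k^-},\xi_k)$, $z_{T_k}=z_{T_k^-}-\gamma'\nabla f(x_{T_k^-},\xi_k)$. *)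

theory Defs
  imports "HOL-Probability.Probability"
begin

text \<open>Flow of the linear ODE  x' = eta (z - x),  z' = eta' (x - z)  over a time span tau,
  started at (x, z). Closed form (valid when eta + eta' \<noteq> 0):
  eta' x + eta z is conserved and x - z decays like exp(-(eta+eta') tau).\<close>
definition cn_flow :: "real \<Rightarrow> real \<Rightarrow> 'a::real_vector \<times> 'a \<Rightarrow> real \<Rightarrow> 'a \<times> 'a" where
  "cn_flow eta eta' p tau =
     (let s = eta + eta'; x = fst p; z = snd p;
          c = (1 / s) *\<^sub>R (eta' *\<^sub>R x + eta *\<^sub>R z);
          w = exp (- s * tau) *\<^sub>R (x - z)
      in (c + (eta / s) *\<^sub>R w, c - (eta' / s) *\<^sub>R w))"

lemma cn_flow_0:
  assumes "eta + eta' \<noteq> 0"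
  shows "cn_flow eta eta' p 0 = p"
proof -
  obtain x z where p: "p = (x, z)" by (cases p)
  have "(1 / (eta + eta')) *\<^sub>R (eta' *\<^sub>R x + eta *\<^sub>R z) + (eta / (eta + eta')) *\<^sub>R (x - z)
        = (1 / (eta + eta')) *\<^sub>R ((eta + eta') *\<^sub>R x)"
    by (simp add: algebra_simps divide_inverse scaleR_add_right scaleR_diff_right)
  moreover have "(1 / (eta + eta')) *\<^sub>R (eta' *\<^sub>R x + eta *\<^sub>R z) - (eta' / (eta + eta')) *\<^sub>R (x - z)
        = (1 / (eta + eta')) *\<^sub>R ((eta + eta') *\<^sub>R z)"
    by (simp add: algebra_simps divide_inverse scaleR_add_right scaleR_diff_right)
  ultimately show ?thesis using assms by (simp add: cn_flow_def p Let_def)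
qed


lemma cn_flow_ode:
  fixes x z :: "'a::real_normed_vector"
  assumes s: "eta + eta' \<noteq> 0"
  shows "((\<lambda>tau. cn_flow eta eta' (x, z) tau) has_vector_derivative
          (eta *\<^sub>R (snd (cn_flow eta eta' (x, z) tau) - fst (cn_flow eta eta' (x, z) tau)),
           eta' *\<^sub>R (fst (cn_flow eta eta' (x, z) tau) - snd (cn_flow eta eta' (x, z) tau)))) (at tau)"
proof -
  define s where "s = eta + eta'"
  have d: "((\<lambda>tau. exp (- s * tau)) has_real_derivative (- s * exp (- s * tau))) (at tau)"
    by (auto intro!: derivative_eq_intros)
  have dw: "((\<lambda>tau. exp (- s * tau) *\<^sub>R (x - z)) has_vector_derivative
              (- s * exp (- s * tau)) *\<^sub>R (x - z)) (at tau)"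
    using d by (auto intro!: derivative_eq_intros simp: has_real_derivative_iff_has_vector_derivative)
  have D: "((\<lambda>tau. cn_flow eta eta' (x, z) tau) has_vector_derivative
          ((eta / s) *\<^sub>R ((- s * exp (- s * tau)) *\<^sub>R (x - z)),
           - ((eta' / s) *\<^sub>R ((- s * exp (- s * tau)) *\<^sub>R (x - z))))) (at tau)"
    unfolding cn_flow_def Let_def fst_conv snd_conv s_def[symmetric]
    by (intro has_vector_derivative_Pair derivative_eq_intros dw) auto
  have diff: "snd (cn_flow eta eta' (x, z) tau) - fst (cn_flow eta eta' (x, z) tau)
      = - ((eta / s + eta' / s) *\<^sub>R (exp (- s * tau) *\<^sub>R (x - z)))"
    by (simp add: cn_flow_def Let_def s_def[symmetric] algebra_simps)
  have one: "eta / s + eta' / s = 1" using s by (simp add: s_def add_divide_distrib[symmetric])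
  have diff': "snd (cn_flow eta eta' (x, z) tau) - fst (cn_flow eta eta' (x, z) tau)
      = - (exp (- s * tau) *\<^sub>R (x - z))"
    using diff one by simp
  moreover have "(eta / s) *\<^sub>R ((- s * exp (- s * tau)) *\<^sub>R (x - z))
      = eta *\<^sub>R (- (exp (- s * tau) *\<^sub>R (x - z)))"
  proof -
    have k: "(eta / s) * (- s * exp (- s * tau)) = - (eta * exp (- s * tau))"
      using s by (simp add: s_def field_simps)
    show ?thesis by (simp only: scaleR_scaleR k) simp
  qed
  moreover have "- ((eta' / s) *\<^sub>R ((- s * exp (- s * tau)) *\<^sub>R (x - z)))
      = eta' *\<^sub>R (exp (- s * tau) *\<^sub>R (x - z))"
  proof -
    have k: "(eta' / s) * (- s * exp (- s * tau)) = - (eta' * exp (- s * tau))"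
      using s by (simp add: s_def field_simps)
    show ?thesis by (simp only: scaleR_scaleR k) simp
  qed
  ultimately have F: "fst (cn_flow eta eta' (x, z) tau) - snd (cn_flow eta eta' (x, z) tau)
      = exp (- s * tau) *\<^sub>R (x - z)"
    and e1: "(eta / s) *\<^sub>R ((- s * exp (- s * tau)) *\<^sub>R (x - z))
      = eta *\<^sub>R (snd (cn_flow eta eta' (x, z) tau) - fst (cn_flow eta eta' (x, z) tau))"
    and e2: "- ((eta' / s) *\<^sub>R ((- s * exp (- s * tau)) *\<^sub>R (x - z)))
      = eta' *\<^sub>R (exp (- s * tau) *\<^sub>R (x - z))"
    by (metis minus_diff_eq minus_minus)+
  show ?thesis unfolding F using D unfolding e1 e2 .
qed

text \<open>State (x_{T_k}, z_{T_k}) right after the k-th jump. E i = T_{i+1} - T_i is the i-th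
  inter-arrival time and xi i is the mark of the (i+1)-th jump (the paper's xi_{i+1}).
  G is the stochastic gradient.\<close>
fun cn_state :: "real \<Rightarrow> real \<Rightarrow> real \<Rightarrow> real \<Rightarrow> ('a::real_vector \<Rightarrow> 'b \<Rightarrow> 'a) \<Rightarrow> 'a
                   \<Rightarrow> (nat \<Rightarrow> real) \<Rightarrow> (nat \<Rightarrow> 'b) \<Rightarrow> nat \<Rightarrow> 'a \<times> 'a" where
  "cn_state eta eta' gamma gamma' G x0 E xi 0 = (x0, x0)"
| "cn_state eta eta' gamma gamma' G x0 E xi (Suc k) =
     (let p = cn_flow eta eta' (cn_state eta eta' gamma gamma' G x0 E xi k) (E k);
          g = G (fst p) (xi k)
      in (fst p - gamma *\<^sub>R g, snd p - gamma' *\<^sub>R g))"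

definition cn_time :: "(nat \<Rightarrow> real) \<Rightarrow> nat \<Rightarrow> real" where
  "cn_time E k = (\<Sum>i<k. E i)"

text \<open>The cadlag process (x_t, z_t): at time t, with k the index such that
  T_k \<le> t < T_{k+1}, follow the flow for time t - T_k from the state after the k-th jump.\<close>
definition cn_process :: "real \<Rightarrow> real \<Rightarrow> real \<Rightarrow> real \<Rightarrow> ('a::real_vector \<Rightarrow> 'b \<Rightarrow> 'a) \<Rightarrow> 'a
                   \<Rightarrow> (nat \<Rightarrow> real) \<Rightarrow> (nat \<Rightarrow> 'b) \<Rightarrow> real \<Rightarrow> 'a \<times> 'a" where
  "cn_process eta eta' gamma gamma' G x0 E xi t =
     (let k = (LEAST k. t < cn_time E (Suc k))
      in cn_flow eta eta' (cn_state eta eta' gamma gamma' G x0 E xi k) (t - cn_time E k))"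

end

theory Submission
  imports Defs
begin

lemma OS:
  fixes phi phi' J :: "real \<Rightarrow> real" and c tau :: real
  assumes tau: "0 \<le> tau"
    and deriv: "\<And>s. s \<in> {0..tau} \<Longrightarrow> (phi has_real_derivative phi' s) (at s within {0..tau})"
    and J: "\<And>s. s \<in> {0..tau} \<Longrightarrow> 0 \<le> J s \<and> J s \<le> (1 - c) * phi s - phi' s"
    and phi_tau: "0 \<le> phi tau"
  shows "(\<integral>\<^sup>+ s. ennreal (exponential_density 1 s) * (indicator {tau<..} s * ennreal (phi tau)
            + indicator {0..tau} s * ennreal (exp (- c *(tau-s)) * J s)) \<partial>lborel)
         \<le> ennreal (exp (- c *tau) * phi 0)"
proof -
  define F where "F s = exp ((c - 1) * s) * phi s" for s
  define F' where "F' s = exp ((c - 1) * s) * ((c - 1) * phi s + phi' s)" for s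
  define B where "B s = - (exp (- c *tau) * F' s)" for s
  have dF: "(F has_vector_derivative F' s) (at s within {0..tau})" if "s \<in> {0..tau}" for s
    unfolding F_def F'_def has_real_derivative_iff_has_vector_derivative[symmetric]
    using deriv[OF that]
    by (auto intro!: derivative_eq_intros simp: algebra_simps)
  have "(F' has_integral (F tau - F 0)) {0..tau}"
    by (rule fundamental_theorem_of_calculus[OF tau dF])
  then have BI: "(B has_integral (exp (- c *tau) * (F 0 - F tau))) {0..tau}"
    unfolding B_def using has_integral_neg[OF has_integral_mult_right[of F' "F tau - F 0" "{0..tau}" "exp (- c *tau)"]]
    by (simp add: algebra_simps)
  have Bge: "exp (-s) * (exp (- c *(tau-s)) * J s) \<le> B s" if "s \<in> {0..tau}" for s
  proof -
    have e: "exp (-s) * exp (- c *(tau-s)) = exp (- c *tau) * exp ((c - 1) * s)"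
      by (simp add: exp_add[symmetric] algebra_simps)
    have "J s \<le> - ((c - 1) * phi s + phi' s)" using J[OF that] by (simp add: algebra_simps)
    then have "exp (- c *tau) * exp ((c - 1) * s) * J s \<le> exp (- c *tau) * exp ((c - 1) * s) * (- ((c - 1) * phi s + phi' s))"
      by (intro mult_left_mono) auto
    then show ?thesis using e by (simp add: B_def F'_def algebra_simps)
  qed
  have Bnn: "0 \<le> B s" if "s \<in> {0..tau}" for s
    using Bge[OF that] J[OF that] by (meson exp_ge_zero mult_nonneg_nonneg order_trans)
  have I1: "(\<integral>\<^sup>+ s. indicator {0..tau} s * B s \<partial>lborel) = ennreal (exp (- c *tau) * (F 0 - F tau))"
    by (rule nn_integral_has_integral_lebesgue[OF Bnn BI])
  have "(\<lambda>x. indicator {0..tau} x *\<^sub>R B x) \<in> lebesgue \<rightarrow>\<^sub>M borel"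
    by (rule has_integral_implies_lebesgue_measurable[OF BI])
  then obtain B' :: "real \<Rightarrow> real" where B'm[measurable]: "B' \<in> borel \<rightarrow>\<^sub>M borel"
    and B'ae: "AE x in lborel. indicator {0..tau} x *\<^sub>R B x = B' x"
    by (auto dest: completion_ex_borel_measurable_real)
  have E1: "(\<integral>\<^sup>+ s. ennreal (exponential_density 1 s) * indicator {..tau} s \<partial>lborel) = ennreal (1 - exp (- tau))"
    using nn_integral_erlang_density[of 1 0 tau] tau by (simp add: erlang_CDF_def)
  have Etot: "(\<integral>\<^sup>+ s. ennreal (exponential_density 1 s) \<partial>lborel) = 1"
  proof -
    interpret p: prob_space "density lborel (exponential_density 1)"
      by (rule prob_space_exponential_density) simp
    have "emeasure (density lborel (exponential_density 1)) UNIV = 1"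
      using p.emeasure_space_1 by simp
    then show ?thesis by (simp add: emeasure_density)
  qed
  have E2: "(\<integral>\<^sup>+ s. ennreal (exponential_density 1 s) * indicator {tau<..} s \<partial>lborel) = ennreal (exp (- tau))"
  proof -
    have "(\<integral>\<^sup>+ s. ennreal (exponential_density 1 s) \<partial>lborel)
      = (\<integral>\<^sup>+ s. ennreal (exponential_density 1 s) * indicator {..tau} s + ennreal (exponential_density 1 s) * indicator {tau<..} s \<partial>lborel)"
      by (intro nn_integral_cong) (auto simp: indicator_def)
    also have "\<dots> = ennreal (1 - exp (- tau)) + (\<integral>\<^sup>+ s. ennreal (exponential_density 1 s) * indicator {tau<..} s \<partial>lborel)"
      by (subst nn_integral_add) (auto simp: E1)
    finally have "1 = ennreal (1 - exp (- tau)) + (\<integral>\<^sup>+ s. ennreal (exponential_density 1 s) * indicator {tau<..} s \<partial>lborel)"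
      using Etot by simp
    moreover have "1 = ennreal (1 - exp (- tau)) + ennreal (exp (-tau))"
    proof -
      have "ennreal (1 - exp (- tau)) + ennreal (exp (-tau)) = ennreal ((1 - exp (- tau)) + exp (-tau))"
        using tau by (intro ennreal_plus[symmetric]) auto
      then show ?thesis by simp
    qed
    ultimately have "ennreal (1 - exp (- tau)) + (\<integral>\<^sup>+ s. ennreal (exponential_density 1 s) * indicator {tau<..} s \<partial>lborel)
        = ennreal (1 - exp (- tau)) + ennreal (exp (-tau))" by simp
    then show ?thesis unfolding ennreal_add_left_cancel by simp
  qed
  have "(\<integral>\<^sup>+ s. ennreal (exponential_density 1 s) * (indicator {tau<..} s * ennreal (phi tau)
            + indicator {0..tau} s * ennreal (exp (- c *(tau-s)) * J s)) \<partial>lborel)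
      \<le> (\<integral>\<^sup>+ s. ennreal (exponential_density 1 s) * indicator {tau<..} s * ennreal (phi tau) + ennreal (B' s) \<partial>lborel)"
  proof (rule nn_integral_mono_AE)
    show "AE s in lborel. ennreal (exponential_density 1 s) * (indicator {tau<..} s * ennreal (phi tau)
            + indicator {0..tau} s * ennreal (exp (- c *(tau-s)) * J s))
          \<le> ennreal (exponential_density 1 s) * indicator {tau<..} s * ennreal (phi tau) + ennreal (B' s)"
      using B'ae
    proof eventually_elim
      case (elim s)
      show ?case
      proof (cases "s \<in> {0..tau}")
        case True
        then have "s \<le> tau" "0 \<le> s" by auto
        have "ennreal (exponential_density 1 s) * ennreal (exp (- c *(tau-s)) * J s) = ennreal (exp (-s) * (exp (- c *(tau-s)) * J s))"
          using \<open>0 \<le> s\<close> J[OF True] by (simp add: exponential_density_def ennreal_mult')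
        also have "\<dots> \<le> ennreal (B' s)"
          using Bge[OF True] elim True by (intro ennreal_leI) auto
        finally show ?thesis using True \<open>s \<le> tau\<close> by (simp add: distrib_left)
      next
        case False
        then show ?thesis by (auto simp: indicator_def)
      qed
    qed
  qed
  also have "\<dots> = (\<integral>\<^sup>+ s. ennreal (exponential_density 1 s) * indicator {tau<..} s \<partial>lborel) * ennreal (phi tau)
                 + (\<integral>\<^sup>+ s. ennreal (B' s) \<partial>lborel)"
    by (subst nn_integral_add) (auto simp: nn_integral_multc)
  also have "\<dots> = ennreal (exp (- tau)) * ennreal (phi tau) + ennreal (exp (- c * tau) * (F 0 - F tau))"
  proof -
    have "(\<integral>\<^sup>+ s. ennreal (B' s) \<partial>lborel) = (\<integral>\<^sup>+ s. indicator {0..tau} s * B s \<partial>lborel)"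
      using B'ae by (intro nn_integral_cong_AE) auto
    then show ?thesis using E2 I1 by simp
  qed
  also have "\<dots> = ennreal (exp (- c * tau) * phi 0)"
  proof -
    have "0 \<le> exp (- c * tau) * (F 0 - F tau)"
      using has_integral_nonneg[OF BI] Bnn by auto
    moreover have "exp (- tau) * phi tau + exp (- c * tau) * (F 0 - F tau) = exp (- c * tau) * phi 0"
      by (simp add: F_def algebra_simps exp_add[symmetric])
    ultimately show ?thesis using phi_tau
      by (simp add: ennreal_mult'[symmetric] ennreal_plus[symmetric] del: ennreal_plus)
  qed
  finally show ?thesis .
qed

locale cnp =
  fixes f :: "'a::euclidean_space \<Rightarrow> real"
    and gradf :: "'a \<Rightarrow> 'a"
    and fstar L mu rho gamma gamma' eta eta' :: real
    and P :: "'b measure"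
    and G :: "'a \<Rightarrow> 'b \<Rightarrow> 'a"
  assumes grad: "\<And>x. (f has_derivative (\<lambda>h. gradf x \<bullet> h)) (at x)"
    and fmin: "\<And>x. fstar \<le> f x"
    and L_pos: "L > 0" and mu_pos: "mu > 0" and rho_ge: "rho \<ge> 1"
    and smooth: "\<And>x y. f x - f y - gradf y \<bullet> (x - y) \<le> L / 2 * (norm (x - y))\<^sup>2"
    and PL: "\<And>x. (norm (gradf x))\<^sup>2 \<ge> 2 * mu * (f x - fstar)"
    and P_prob: "prob_space P"
    and G_meas: "(\<lambda>(x, s). G x s) \<in> borel_measurable (borel \<Otimes>\<^sub>M P)"
    and unbiased: "\<And>x. integrable P (G x) \<and> (\<integral>s. G x s \<partial>P) = gradf x"
    and SGC: "\<And>x. (\<integral>\<^sup>+ s. ennreal ((norm (G x s))\<^sup>2) \<partial>P) \<le> ennreal (rho * (norm (gradf x))\<^sup>2)"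
    and gamma_pos: "0 < gamma" and gamma_le: "gamma \<le> 1 / (rho * L)"
    and gamma'_def: "gamma' = gamma + sqrt (gamma / (2 * rho))"
    and eta_def: "eta = sqrt (gamma / (2 * rho))"
    and eta'_def: "eta' = mu * gamma / 2 - sqrt (gamma / (2 * rho))"
begin

definition V :: "'a \<times> 'a \<Rightarrow> real" where
  "V p = f (fst p) - fstar + (norm (fst p - snd p))\<^sup>2 / 2"

definition jump :: "'a \<times> 'a \<Rightarrow> 'b \<Rightarrow> 'a \<times> 'a" where
  "jump p s = (fst p - gamma *\<^sub>R G (fst p) s, snd p - gamma' *\<^sub>R G (fst p) s)"

definition kk :: real where "kk = L * gamma\<^sup>2 / 2 + eta\<^sup>2 / 2"

definition Jf :: "'a \<times> 'a \<Rightarrow> real" where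
  "Jf p = V p - gamma * (norm (gradf (fst p)))\<^sup>2 + eta * ((fst p - snd p) \<bullet> gradf (fst p))
          + kk * rho * (norm (gradf (fst p)))\<^sup>2"

definition cc :: real where "cc = mu * gamma / 2"

definition dV :: "'a \<times> 'a \<Rightarrow> real" where
  "dV p = gradf (fst p) \<bullet> (eta *\<^sub>R (snd p - fst p))
          + (fst p - snd p) \<bullet> (eta *\<^sub>R (snd p - fst p) - eta' *\<^sub>R (fst p - snd p))"

lemma rho_pos: "rho > 0" using rho_ge by simp

lemma eta_sq: "eta\<^sup>2 = gamma / (2 * rho)"
  using gamma_pos rho_pos by (simp add: eta_def)

lemma eta_nonneg: "0 \<le> eta" using gamma_pos rho_pos by (simp add: eta_def)

lemma gamma'_eta: "gamma' - gamma = eta" by (simp add: gamma'_def eta_def)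

lemma eta_sum: "eta + eta' = cc" by (simp add: eta_def eta'_def cc_def)

lemma cc_pos: "cc > 0" using mu_pos gamma_pos by (simp add: cc_def)

lemma V_nonneg: "0 \<le> V p"
  using fmin[of "fst p"] by (simp add: V_def)

lemma f_cont: "continuous_on UNIV f"
  using grad by (meson has_derivative_continuous continuous_at_imp_continuous_on)

lemma f_meas[measurable]: "f \<in> borel_measurable borel"
  by (rule borel_measurable_continuous_onI[OF f_cont])

lemma G_comp[measurable (raw)]:
  assumes "a \<in> N \<rightarrow>\<^sub>M borel" "b \<in> N \<rightarrow>\<^sub>M P"
  shows "(\<lambda>w. G (a w) (b w)) \<in> N \<rightarrow>\<^sub>M borel"
proof -
  have "(\<lambda>w. (a w, b w)) \<in> N \<rightarrow>\<^sub>M borel \<Otimes>\<^sub>M P"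
    using assms by (rule measurable_Pair)
  from measurable_compose[OF this G_meas] show ?thesis by simp
qed

lemma G_meas1: "G x \<in> borel_measurable P"
  using G_comp[of "\<lambda>_. x" P "\<lambda>s. s"] by simp

lemma kk_nonneg: "0 \<le> kk" using L_pos by (simp add: kk_def)

lemma JB_pointwise:
  fixes x z :: 'a and g :: 'a
  shows "V (x - gamma *\<^sub>R g, z - gamma' *\<^sub>R g) \<le>
     f x - fstar - gamma * (gradf x \<bullet> g) + kk * (norm g)\<^sup>2 + (norm (x - z))\<^sup>2 / 2 + eta * ((x - z) \<bullet> g)"
proof -
  have sm: "f (x - gamma *\<^sub>R g) \<le> f x - gamma * (gradf x \<bullet> g) + L / 2 * gamma\<^sup>2 * (norm g)\<^sup>2"
    using smooth[of "x - gamma *\<^sub>R g" x] gamma_pos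
    by (simp add: power_mult_distrib algebra_simps inner_diff_right)
  have d: "x - gamma *\<^sub>R g - (z - gamma' *\<^sub>R g) = (x - z) + eta *\<^sub>R g"
    using gamma'_eta by (simp add: algebra_simps flip: scaleR_diff_left)
  have n: "(norm ((x - z) + eta *\<^sub>R g))\<^sup>2 = (norm (x - z))\<^sup>2 + 2 * eta * ((x - z) \<bullet> g) + eta\<^sup>2 * (norm g)\<^sup>2"
    unfolding power2_norm_eq_inner by (simp add: inner_add_left inner_add_right inner_commute power2_eq_square algebra_simps)
  show ?thesis
    unfolding V_def fst_conv snd_conv d n using sm by (simp add: kk_def algebra_simps add_divide_distrib diff_divide_distrib)
qed

lemma JB:
  fixes p :: "'a \<times> 'a"
  shows "(\<integral>\<^sup>+ s. ennreal (V (jump p s)) \<partial>P) \<le> ennreal (Jf p)" and "0 \<le> Jf p"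
proof -
  interpret P: prob_space P by (rule P_prob)
  obtain x z where p: "p = (x, z)" by (cases p)
  define g where "g = G x"
  have gm[measurable]: "g \<in> borel_measurable P" unfolding g_def by (rule G_meas1)
  have gi: "integrable P g" and gI: "(\<integral>s. g s \<partial>P) = gradf x"
    using unbiased[of x] by (auto simp: g_def)
  have sqm[measurable]: "(\<lambda>s. (norm (g s))\<^sup>2) \<in> borel_measurable P" by measurable
  have sqfin: "(\<integral>\<^sup>+ s. ennreal ((norm (g s))\<^sup>2) \<partial>P) < \<infinity>"
    using SGC[of x] unfolding g_def by (simp add: le_less_trans)
  have sqi: "integrable P (\<lambda>s. (norm (g s))\<^sup>2)"
    by (rule integrableI_bounded) (use sqfin in auto)
  have sqI: "(\<integral>s. (norm (g s))\<^sup>2 \<partial>P) \<le> rho * (norm (gradf x))\<^sup>2"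
  proof -
    have "ennreal (\<integral>s. (norm (g s))\<^sup>2 \<partial>P) = (\<integral>\<^sup>+ s. ennreal ((norm (g s))\<^sup>2) \<partial>P)"
      by (rule nn_integral_eq_integral[symmetric]) (use sqi in auto)
    also have "\<dots> \<le> ennreal (rho * (norm (gradf x))\<^sup>2)" using SGC[of x] by (simp add: g_def)
    finally show ?thesis using rho_pos by (simp add: ennreal_le_iff)
  qed
  define R where "R s = f x - fstar - gamma * (gradf x \<bullet> g s) + kk * (norm (g s))\<^sup>2 + (norm (x - z))\<^sup>2 / 2 + eta * ((x - z) \<bullet> g s)" for s
  have Rge: "V (jump p s) \<le> R s" for s
    unfolding p jump_def R_def g_def fst_conv snd_conv by (rule JB_pointwise)
  have Rnn: "0 \<le> R s" for s using Rge[of s] V_nonneg[of "jump p s"] by simp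
  have Ri: "integrable P R"
    unfolding R_def using gi sqi by simp
  have RI: "(\<integral>s. R s \<partial>P) = f x - fstar - gamma * (gradf x \<bullet> gradf x) + kk * (\<integral>s. (norm (g s))\<^sup>2 \<partial>P)
          + (norm (x - z))\<^sup>2 / 2 + eta * ((x - z) \<bullet> gradf x)"
    unfolding R_def using gi sqi gI
    by (simp add: integral_add integral_diff integrable_inner_right integral_inner_right P.prob_space)
  have RJ: "(\<integral>s. R s \<partial>P) \<le> Jf p"
  proof -
    have "kk * (\<integral>s. (norm (g s))\<^sup>2 \<partial>P) \<le> kk * (rho * (norm (gradf x))\<^sup>2)"
      by (rule mult_left_mono[OF sqI kk_nonneg])
    then show ?thesis unfolding RI Jf_def p V_def fst_conv snd_conv
      by (simp add: power2_norm_eq_inner algebra_simps)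
  qed
  have "(\<integral>\<^sup>+ s. ennreal (V (jump p s)) \<partial>P) \<le> (\<integral>\<^sup>+ s. ennreal (R s) \<partial>P)"
    by (intro nn_integral_mono ennreal_leI Rge)
  also have "\<dots> = ennreal (\<integral>s. R s \<partial>P)"
    by (rule nn_integral_eq_integral) (use Ri Rnn in auto)
  also have "\<dots> \<le> ennreal (Jf p)" by (rule ennreal_leI[OF RJ])
  finally show "(\<integral>\<^sup>+ s. ennreal (V (jump p s)) \<partial>P) \<le> ennreal (Jf p)" .
  have "0 \<le> integral\<^sup>L P R" using Rnn by (simp add: integral_nonneg)
  then show "0 \<le> Jf p" using RJ by linarith
qed

end

context cnp begin

lemma f_chain:
  "(u has_derivative u') (at s within S) \<Longrightarrow> ((\<lambda>s. f (u s)) has_derivative (\<lambda>h. gradf (u s) \<bullet> u' h)) (at s within S)"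
  by (rule has_derivative_compose[OF _ grad])

lemma V_flow_deriv:
  "((\<lambda>s. V (cn_flow eta eta' q s)) has_real_derivative dV (cn_flow eta eta' q s)) (at s)"
proof -
  obtain x z where q: "q = (x, z)" by (cases q)
  define Fl where "Fl = (\<lambda>s. cn_flow eta eta' (x, z) s)"
  define v where "v = (eta *\<^sub>R (snd (Fl s) - fst (Fl s)), eta' *\<^sub>R (fst (Fl s) - snd (Fl s)))"
  have hFl: "(Fl has_derivative (\<lambda>h. h *\<^sub>R v)) (at s)"
    using cn_flow_ode[of eta eta' x z s] cc_pos eta_sum
    unfolding Fl_def v_def has_vector_derivative_def by simp
  have hx: "((\<lambda>s. fst (Fl s)) has_derivative (\<lambda>h. h *\<^sub>R fst v)) (at s)"
    using has_derivative_fst[OF hFl] by simp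
  have hz: "((\<lambda>s. snd (Fl s)) has_derivative (\<lambda>h. h *\<^sub>R snd v)) (at s)"
    using has_derivative_snd[OF hFl] by simp
  have hf: "((\<lambda>s. f (fst (Fl s))) has_derivative (\<lambda>h. gradf (fst (Fl s)) \<bullet> (h *\<^sub>R fst v))) (at s)"
    by (rule f_chain[OF hx])
  have hd: "((\<lambda>s. fst (Fl s) - snd (Fl s)) has_derivative (\<lambda>h. h *\<^sub>R fst v - h *\<^sub>R snd v)) (at s)"
    by (rule has_derivative_diff[OF hx hz])
  have hi: "((\<lambda>s. (fst (Fl s) - snd (Fl s)) \<bullet> (fst (Fl s) - snd (Fl s))) has_derivative
      (\<lambda>h. (fst (Fl s) - snd (Fl s)) \<bullet> (h *\<^sub>R fst v - h *\<^sub>R snd v) + (h *\<^sub>R fst v - h *\<^sub>R snd v) \<bullet> (fst (Fl s) - snd (Fl s)))) (at s)"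
    by (rule has_derivative_inner[OF hd hd])
  define u where "u = fst (Fl s) - snd (Fl s)"
  define w where "w = fst v - snd v"
  have hd': "((\<lambda>s. fst (Fl s) - snd (Fl s)) has_derivative (\<lambda>h. h *\<^sub>R w)) (at s)"
    using hd unfolding w_def by (simp add: scaleR_diff_right)
  have hi': "((\<lambda>s. (fst (Fl s) - snd (Fl s)) \<bullet> (fst (Fl s) - snd (Fl s))) has_derivative
      (\<lambda>h. u \<bullet> (h *\<^sub>R w) + (h *\<^sub>R w) \<bullet> u)) (at s)"
    unfolding u_def by (rule has_derivative_inner[OF hd' hd'])
  have hi2: "((\<lambda>s. (1/2) * ((fst (Fl s) - snd (Fl s)) \<bullet> (fst (Fl s) - snd (Fl s)))) has_derivative
      (\<lambda>h. (1/2) * (u \<bullet> (h *\<^sub>R w) + (h *\<^sub>R w) \<bullet> u))) (at s)"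
    using has_derivative_scaleR_right[OF hi', of "1/2"] by (simp only: real_scaleR_def)
  have hV: "((\<lambda>s. f (fst (Fl s)) - fstar + (1/2) * ((fst (Fl s) - snd (Fl s)) \<bullet> (fst (Fl s) - snd (Fl s)))) has_derivative
      (\<lambda>h. gradf (fst (Fl s)) \<bullet> (h *\<^sub>R fst v) - 0 + (1/2) * (u \<bullet> (h *\<^sub>R w) + (h *\<^sub>R w) \<bullet> u))) (at s)"
    by (intro has_derivative_add has_derivative_diff hf hi2 has_derivative_const)
  have e1: "gradf (fst (Fl s)) \<bullet> (h *\<^sub>R fst v) - 0 + (1/2) * (u \<bullet> (h *\<^sub>R w) + (h *\<^sub>R w) \<bullet> u)
      = h * (gradf (fst (Fl s)) \<bullet> fst v + u \<bullet> w)" for h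
  proof -
    have c: "w \<bullet> u = u \<bullet> w" by (rule inner_commute)
    show ?thesis by (simp add: c algebra_simps)
  qed
  have e2: "gradf (fst (Fl s)) \<bullet> fst v + u \<bullet> w = dV (Fl s)"
    unfolding dV_def u_def w_def v_def by simp
  have eqV: "(\<lambda>s. V (Fl s)) = (\<lambda>s. f (fst (Fl s)) - fstar + (1/2) * ((fst (Fl s) - snd (Fl s)) \<bullet> (fst (Fl s) - snd (Fl s))))"
    by (simp add: fun_eq_iff V_def power2_norm_eq_inner)
  have D: "((\<lambda>s. V (Fl s)) has_derivative (\<lambda>h. h * dV (Fl s))) (at s)"
    using hV unfolding eqV e1 e2 .
  have fe: "(\<lambda>h. h * dV (Fl s)) = (*) (dV (Fl s))" by (rule ext) (simp add: mult.commute)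
  have D': "((\<lambda>s. V (Fl s)) has_derivative (*) (dV (Fl s))) (at s)" using D unfolding fe .
  show ?thesis unfolding has_field_derivative_def q using D' unfolding Fl_def .
qed

lemma GEN: "Jf p \<le> (1 - cc) * V p - dV p"
proof -
  obtain x z where p: "p = (x, z)" by (cases p)
  define a where "a = (norm (x - z))\<^sup>2"
  define b where "b = (norm (gradf x))\<^sup>2"
  define d where "d = (x - z) \<bullet> gradf x"
  have i1: "gradf x \<bullet> (z - x) = - d"
  proof -
    have "gradf x \<bullet> (z - x) = - (gradf x \<bullet> (x - z))" by (simp add: inner_diff_right)
    then show ?thesis by (simp add: d_def inner_commute)
  qed
  have i2: "(x - z) \<bullet> (z - x) = - a"
  proof -
    have "(x - z) \<bullet> (z - x) = - ((x - z) \<bullet> (x - z))" by (simp add: inner_diff_right inner_diff_left)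
    then show ?thesis by (simp add: a_def power2_norm_eq_inner)
  qed
  have i3: "(x - z) \<bullet> (x - z) = a" by (simp add: a_def power2_norm_eq_inner)
  have dVe: "dV p = - eta * d - cc * a"
  proof -
    have "dV p = eta * (gradf x \<bullet> (z - x)) + (eta * ((x - z) \<bullet> (z - x)) - eta' * ((x - z) \<bullet> (x - z)))"
      by (simp add: dV_def p inner_diff_right)
    also have "\<dots> = - eta * d - (eta + eta') * a" unfolding i1 i2 i3 by (simp add: algebra_simps)
    finally show ?thesis using eta_sum by simp
  qed
  have Jfe: "Jf p = (f x - fstar) + a / 2 - gamma * b + eta * d + kk * rho * b"
    by (simp add: Jf_def V_def p a_def b_def d_def)
  have Ve: "V p = (f x - fstar) + a / 2" by (simp add: V_def p a_def)
  have kr: "kk * rho * b = L * gamma\<^sup>2 * rho / 2 * b + gamma * b / 4"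
    using eta_sq rho_pos by (simp add: kk_def field_simps)
  have hL: "gamma * rho * L \<le> 1"
    using gamma_le rho_pos L_pos by (simp add: field_simps)
  have b0: "0 \<le> b" by (simp add: b_def)
  have a0: "0 \<le> a" by (simp add: a_def)
  have t1: "L * gamma\<^sup>2 * rho / 2 * b \<le> gamma * b / 2"
  proof -
    have "(gamma * rho * L) * (gamma * b / 2) \<le> 1 * (gamma * b / 2)"
      by (rule mult_right_mono[OF hL]) (use gamma_pos b0 in simp)
    then show ?thesis by (simp add: power2_eq_square algebra_simps)
  qed
  have t2: "cc * (f x - fstar) \<le> gamma * b / 4"
  proof -
    have "gamma / 4 * (2 * mu * (f x - fstar)) \<le> gamma / 4 * b"
      by (rule mult_left_mono) (use PL[of x] gamma_pos in \<open>auto simp: b_def\<close>)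
    then show ?thesis by (simp add: cc_def algebra_simps)
  qed
  have t3: "0 \<le> cc * a" using cc_pos a0 by simp
  have e: "(1 - cc) * V p - dV p - Jf p = - (cc * (f x - fstar)) + cc * a / 2 + gamma * b - kk * rho * b"
    unfolding Jfe Ve dVe by (simp add: algebra_simps add_divide_distrib diff_divide_distrib)
  show ?thesis using e t1 t2 t3 kr by linarith
qed

lemma flow_meas[measurable (raw)]:
  fixes a :: "'n \<Rightarrow> 'a \<times> 'a"
  assumes "a \<in> N \<rightarrow>\<^sub>M borel" "c \<in> N \<rightarrow>\<^sub>M borel"
  shows "(\<lambda>w. cn_flow eta eta' (a w) (c w)) \<in> N \<rightarrow>\<^sub>M borel"
proof -
  have [measurable]: "a \<in> N \<rightarrow>\<^sub>M borel \<Otimes>\<^sub>M borel" using assms(1) by (simp add: borel_prod)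
  note [measurable] = assms(2)
  have [measurable]: "(\<lambda>w. fst (a w)) \<in> N \<rightarrow>\<^sub>M borel" "(\<lambda>w. snd (a w)) \<in> N \<rightarrow>\<^sub>M borel" by measurable
  have [measurable]: "(\<lambda>w. exp (- (eta + eta') * c w)) \<in> N \<rightarrow>\<^sub>M borel" using assms(2) by measurable
  show ?thesis unfolding cn_flow_def Let_def
    by measurable
qed

lemma jump_meas[measurable (raw)]:
  fixes a :: "'n \<Rightarrow> 'a \<times> 'a"
  assumes "a \<in> N \<rightarrow>\<^sub>M borel" "b \<in> N \<rightarrow>\<^sub>M P"
  shows "(\<lambda>w. jump (a w) (b w)) \<in> N \<rightarrow>\<^sub>M borel"
proof -
  have [measurable]: "a \<in> N \<rightarrow>\<^sub>M borel \<Otimes>\<^sub>M borel" using assms(1) by (simp add: borel_prod)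
  note [measurable] = assms(2)
  show ?thesis unfolding jump_def borel_prod[symmetric] by measurable
qed

lemma V_meas[measurable]: "V \<in> borel_measurable borel"
  unfolding V_def borel_prod[symmetric] by measurable

end

context cnp begin

definition Qm :: "(real \<times> 'b) measure" where
  "Qm = density lborel (exponential_density 1) \<Otimes>\<^sub>M P"

lemma sets_Qm: "sets Qm = sets (borel \<Otimes>\<^sub>M P)"
  unfolding Qm_def by (intro sets_pair_measure_cong) auto

lemma space_Qm: "space Qm = UNIV \<times> space P"
  unfolding Qm_def by (simp add: space_pair_measure)

definition OneStep :: "('a \<times> 'a \<Rightarrow> real) \<Rightarrow> real \<Rightarrow> real \<Rightarrow> bool" where
  "OneStep W c beta \<longleftrightarrow> (\<forall>q tau. 0 \<le> tau \<longrightarrow>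
     (\<integral>\<^sup>+ z. ennreal (of_bool (tau < fst z) * W (cn_flow eta eta' q tau))
            + ennreal (of_bool (fst z \<le> tau) * beta * exp (- c * (tau - fst z))
                        * W (jump (cn_flow eta eta' q (fst z)) (snd z))) \<partial>Qm)
     \<le> ennreal (exp (- c * tau) * W q))"

lemma OneStep_from:
  fixes W dW Jw :: "'a \<times> 'a \<Rightarrow> real" and c beta :: real
  assumes Wm[measurable]: "W \<in> borel_measurable borel"
    and Wnn: "\<And>p. 0 \<le> W p" and beta: "0 \<le> beta"
    and Jb: "\<And>p. (\<integral>\<^sup>+ s. ennreal (beta * W (jump p s)) \<partial>P) \<le> ennreal (Jw p)"
    and Jnn: "\<And>p. 0 \<le> Jw p"
    and der: "\<And>q s. ((\<lambda>s. W (cn_flow eta eta' q s)) has_real_derivative dW (cn_flow eta eta' q s)) (at s)"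
    and gen: "\<And>p. Jw p \<le> (1 - c) * W p - dW p"
  shows "OneStep W c beta"
  unfolding OneStep_def
proof (intro allI impI)
  fix q :: "'a \<times> 'a" and tau :: real
  assume tau: "0 \<le> tau"
  interpret P: prob_space P by (rule P_prob)
  define Fq where "Fq s = cn_flow eta eta' q s" for s
  have Fqm[measurable]: "Fq \<in> borel_measurable borel" unfolding Fq_def by measurable
  define h where "h z = ennreal (of_bool (tau < fst z) * W (Fq tau))
     + ennreal (of_bool (fst z \<le> tau) * beta * exp (- c * (tau - fst z)) * W (jump (Fq (fst z)) (snd z)))"
    for z :: "real \<times> 'b"
  have hm: "h \<in> borel_measurable (borel \<Otimes>\<^sub>M P)" unfolding h_def by measurable
  have hm': "h \<in> borel_measurable (density lborel (exponential_density 1) \<Otimes>\<^sub>M P)"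
    using hm by (subst measurable_cong_sets[OF sets_Qm[unfolded Qm_def] refl])
  have inner_m: "(\<lambda>s. \<integral>\<^sup>+ y. h (s, y) \<partial>P) \<in> borel_measurable borel"
    using P.borel_measurable_nn_integral_fst[OF hm] by simp
  have "(\<integral>\<^sup>+ z. h z \<partial>Qm) = (\<integral>\<^sup>+ s. (\<integral>\<^sup>+ y. h (s, y) \<partial>P) \<partial>density lborel (exponential_density 1))"
    unfolding Qm_def by (rule P.nn_integral_fst[symmetric, OF hm'])
  also have "\<dots> = (\<integral>\<^sup>+ s. ennreal (exponential_density 1 s) * (\<integral>\<^sup>+ y. h (s, y) \<partial>P) \<partial>lborel)"
    by (rule nn_integral_density) (use inner_m in simp_all)
  also have "\<dots> \<le> (\<integral>\<^sup>+ s. ennreal (exponential_density 1 s) * (indicator {tau<..} s * ennreal (W (Fq tau))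
            + indicator {0..tau} s * ennreal (exp (- c * (tau - s)) * Jw (Fq s))) \<partial>lborel)"
  proof (rule nn_integral_mono)
    fix s :: real
    show "ennreal (exponential_density 1 s) * (\<integral>\<^sup>+ y. h (s, y) \<partial>P)
        \<le> ennreal (exponential_density 1 s) * (indicator {tau<..} s * ennreal (W (Fq tau))
            + indicator {0..tau} s * ennreal (exp (- c * (tau - s)) * Jw (Fq s)))"
    proof (cases "s < 0")
      case True
      then show ?thesis by (simp add: exponential_density_def)
    next
      case False
      have "(\<integral>\<^sup>+ y. h (s, y) \<partial>P) = ennreal (of_bool (tau < s) * W (Fq tau))
          + (\<integral>\<^sup>+ y. ennreal (of_bool (s \<le> tau) * exp (- c * (tau - s))) * ennreal (beta * W (jump (Fq s) y)) \<partial>P)"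
        unfolding h_def fst_conv snd_conv
        by (subst nn_integral_add) (auto simp: P.emeasure_space_1 ennreal_mult'[symmetric] mult_ac Wnn beta)
      also have "\<dots> = ennreal (of_bool (tau < s) * W (Fq tau))
          + ennreal (of_bool (s \<le> tau) * exp (- c * (tau - s))) * (\<integral>\<^sup>+ y. ennreal (beta * W (jump (Fq s) y)) \<partial>P)"
        by (subst nn_integral_cmult) auto
      also have "\<dots> \<le> ennreal (of_bool (tau < s) * W (Fq tau))
          + ennreal (of_bool (s \<le> tau) * exp (- c * (tau - s))) * ennreal (Jw (Fq s))"
        by (intro add_left_mono mult_left_mono Jb) auto
      also have "\<dots> = indicator {tau<..} s * ennreal (W (Fq tau))
            + indicator {0..tau} s * ennreal (exp (- c * (tau - s)) * Jw (Fq s))"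
        using False Jnn[of "Fq s"] by (auto simp: indicator_def ennreal_mult'[symmetric])
      finally show ?thesis by (rule mult_left_mono) simp
    qed
  qed
  also have "\<dots> \<le> ennreal (exp (- c * tau) * W (Fq 0))"
  proof (rule OS[OF tau])
    fix s assume "s \<in> {0..tau}"
    show "((\<lambda>s. W (Fq s)) has_real_derivative dW (Fq s)) (at s within {0..tau})"
      unfolding Fq_def by (rule has_field_derivative_at_within[OF der])
    show "0 \<le> Jw (Fq s) \<and> Jw (Fq s) \<le> (1 - c) * W (Fq s) - dW (Fq s)"
      using Jnn gen by blast
  next
    show "0 \<le> W (Fq tau)" by (rule Wnn)
  qed
  also have "Fq 0 = q" unfolding Fq_def using cn_flow_0[of eta eta' q] cc_pos eta_sum by simp
  finally show "(\<integral>\<^sup>+ z. ennreal (of_bool (tau < fst z) * W (cn_flow eta eta' q tau))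
            + ennreal (of_bool (fst z \<le> tau) * beta * exp (- c * (tau - fst z))
                        * W (jump (cn_flow eta eta' q (fst z)) (snd z))) \<partial>Qm)
     \<le> ennreal (exp (- c * tau) * W q)" unfolding h_def Fq_def .
qed

lemma OneStep_V: "OneStep V cc 1"
proof (rule OneStep_from[where dW = dV and Jw = Jf])
  show "\<And>p. 0 \<le> V p" by (rule V_nonneg)
  show "\<And>p. (\<integral>\<^sup>+ s. ennreal (1 * V (jump p s)) \<partial>P) \<le> ennreal (Jf p)" using JB(1) by simp
  show "\<And>p. 0 \<le> Jf p" by (rule JB(2))
  show "\<And>q s. ((\<lambda>s. V (cn_flow eta eta' q s)) has_real_derivative dV (cn_flow eta eta' q s)) (at s)"
    by (rule V_flow_deriv)
  show "\<And>p. Jf p \<le> (1 - cc) * V p - dV p" by (rule GEN)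
qed auto

lemma OneStep_1: "OneStep (\<lambda>_. 1) (-1) 2"
proof (rule OneStep_from[where dW = "\<lambda>_. 0" and Jw = "\<lambda>_. 2"])
  interpret P: prob_space P by (rule P_prob)
  show "\<And>p. (\<integral>\<^sup>+ s. ennreal (2 * 1) \<partial>P) \<le> ennreal 2" by (simp add: P.emeasure_space_1)
qed auto

end

lemma cn_state_cong:
  assumes "\<And>i. i < n \<Longrightarrow> E i = E' i" "\<And>i. i < n \<Longrightarrow> xi i = xi' i"
  shows "cn_state eta eta' gamma gamma' G x0 E xi n = cn_state eta eta' gamma gamma' G x0 E' xi' n"
  using assms by (induction n) (auto simp: Let_def)

lemma cn_time_cong:
  assumes "\<And>i. i < n \<Longrightarrow> E i = E' i"
  shows "cn_time E n = cn_time E' n"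
  using assms unfolding cn_time_def by (intro sum.cong) auto

context cnp begin

lemma prob_Qm: "prob_space Qm"
  unfolding Qm_def by (intro prob_space_pair prob_space_exponential_density P_prob) simp

definition Pin :: "nat \<Rightarrow> (nat \<Rightarrow> real \<times> 'b) measure" where
  "Pin n = PiM {..<n} (\<lambda>_. Qm)"

definition st :: "'a \<Rightarrow> nat \<Rightarrow> (nat \<Rightarrow> real \<times> 'b) \<Rightarrow> 'a \<times> 'a" where
  "st x0 n y = cn_state eta eta' gamma gamma' G x0 (\<lambda>i. fst (y i)) (\<lambda>i. snd (y i)) n"

definition Tm :: "nat \<Rightarrow> (nat \<Rightarrow> real \<times> 'b) \<Rightarrow> real" where
  "Tm n y = cn_time (\<lambda>i. fst (y i)) n"

definition Dn :: "real \<Rightarrow> nat \<Rightarrow> (nat \<Rightarrow> real \<times> 'b) \<Rightarrow> bool" where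
  "Dn t n y \<longleftrightarrow> (\<forall>i<n. Tm (Suc i) y \<le> t)"

definition Term :: "('a \<times> 'a \<Rightarrow> real) \<Rightarrow> real \<Rightarrow> 'a \<Rightarrow> real \<Rightarrow> nat \<Rightarrow> (nat \<Rightarrow> real \<times> 'b) \<Rightarrow> ennreal" where
  "Term W beta x0 t n y = ennreal (of_bool (Dn t n y \<and> t < Tm (Suc n) y) * beta ^ n
      * W (cn_flow eta eta' (st x0 n y) (t - Tm n y)))"

definition Rest :: "('a \<times> 'a \<Rightarrow> real) \<Rightarrow> real \<Rightarrow> real \<Rightarrow> 'a \<Rightarrow> real \<Rightarrow> nat \<Rightarrow> (nat \<Rightarrow> real \<times> 'b) \<Rightarrow> ennreal" where
  "Rest W c beta x0 t n y = ennreal (of_bool (Dn t n y) * beta ^ n * exp (- c * (t - Tm n y)) * W (st x0 n y))"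

lemma st_0: "st x0 0 y = (x0, x0)" by (simp add: st_def)
lemma Tm_0: "Tm 0 y = 0" by (simp add: Tm_def cn_time_def)
lemma Dn_0: "Dn t 0 y" by (simp add: Dn_def)

lemma st_Suc: "st x0 (Suc n) y = jump (cn_flow eta eta' (st x0 n y) (fst (y n))) (snd (y n))"
  by (simp add: st_def Let_def jump_def)

lemma Tm_Suc: "Tm (Suc n) y = Tm n y + fst (y n)"
  by (simp add: Tm_def cn_time_def)

lemma Dn_Suc: "Dn t (Suc n) y \<longleftrightarrow> Dn t n y \<and> Tm (Suc n) y \<le> t"
  by (auto simp: Dn_def less_Suc_eq)

lemma st_cong: "(\<And>i. i < n \<Longrightarrow> y i = y' i) \<Longrightarrow> st x0 n y = st x0 n y'"
  unfolding st_def by (rule cn_state_cong) auto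

lemma Tm_cong: "(\<And>i. i < n \<Longrightarrow> y i = y' i) \<Longrightarrow> Tm n y = Tm n y'"
  unfolding Tm_def by (rule cn_time_cong) auto

lemma Dn_cong: "(\<And>i. i < n \<Longrightarrow> y i = y' i) \<Longrightarrow> Dn t n y = Dn t n y'"
proof -
  assume a: "\<And>i. i < n \<Longrightarrow> y i = y' i"
  have "Tm (Suc i) y = Tm (Suc i) y'" if "i < n" for i
    using that a by (intro Tm_cong) auto
  then show ?thesis by (auto simp: Dn_def)
qed

lemma upd_st: "st x0 n (y(n := z)) = st x0 n y" by (rule st_cong) auto
lemma upd_Tm: "Tm n (y(n := z)) = Tm n y" by (rule Tm_cong) auto
lemma upd_Dn: "Dn t n (y(n := z)) = Dn t n y" by (rule Dn_cong) auto

lemma comp_fst_meas[measurable]: "i < m \<Longrightarrow> (\<lambda>y. fst (y i)) \<in> Pin m \<rightarrow>\<^sub>M borel"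
proof -
  assume "i < m"
  then have "(\<lambda>y. y i) \<in> Pin m \<rightarrow>\<^sub>M Qm" unfolding Pin_def by (intro measurable_component_singleton) auto
  then have "(\<lambda>y. y i) \<in> Pin m \<rightarrow>\<^sub>M borel \<Otimes>\<^sub>M P" by (simp add: measurable_cong_sets[OF refl sets_Qm])
  then show ?thesis by measurable
qed

lemma comp_snd_meas[measurable]: "i < m \<Longrightarrow> (\<lambda>y. snd (y i)) \<in> Pin m \<rightarrow>\<^sub>M P"
proof -
  assume "i < m"
  then have "(\<lambda>y. y i) \<in> Pin m \<rightarrow>\<^sub>M Qm" unfolding Pin_def by (intro measurable_component_singleton) auto
  then have "(\<lambda>y. y i) \<in> Pin m \<rightarrow>\<^sub>M borel \<Otimes>\<^sub>M P" by (simp add: measurable_cong_sets[OF refl sets_Qm])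
  then show ?thesis by measurable
qed

lemma Tm_meas[measurable]: "n \<le> m \<Longrightarrow> Tm n \<in> Pin m \<rightarrow>\<^sub>M borel"
proof (induction n)
  case 0 then show ?case by (simp add: Tm_0)
next
  case (Suc n)
  then have [measurable]: "Tm n \<in> Pin m \<rightarrow>\<^sub>M borel" and [measurable]: "(\<lambda>y. fst (y n)) \<in> Pin m \<rightarrow>\<^sub>M borel"
    by auto
  show ?case unfolding Tm_Suc[abs_def] by measurable
qed

lemma st_meas[measurable]: "n \<le> m \<Longrightarrow> st x0 n \<in> Pin m \<rightarrow>\<^sub>M borel"
proof (induction n)
  case 0 then show ?case by (simp add: st_0)
next
  case (Suc n)
  then have [measurable]: "st x0 n \<in> Pin m \<rightarrow>\<^sub>M borel" and [measurable]: "(\<lambda>y. fst (y n)) \<in> Pin m \<rightarrow>\<^sub>M borel"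
    and [measurable]: "(\<lambda>y. snd (y n)) \<in> Pin m \<rightarrow>\<^sub>M P"
    by auto
  show ?case unfolding st_Suc[abs_def] by measurable
qed

lemma Dn_meas[measurable]: "n \<le> m \<Longrightarrow> Measurable.pred (Pin m) (Dn t n)"
proof (induction n)
  case 0 then show ?case by (simp add: Dn_0)
next
  case (Suc n)
  then have [measurable]: "Measurable.pred (Pin m) (Dn t n)" and [measurable]: "Tm (Suc n) \<in> Pin m \<rightarrow>\<^sub>M borel"
    by auto
  show ?case unfolding Dn_Suc[abs_def] by measurable
qed

lemma Term_meas[measurable]:
  assumes [measurable]: "W \<in> borel_measurable borel"
  shows "Term W beta x0 t n \<in> borel_measurable (Pin (Suc n))"
proof -
  have [measurable]: "Tm n \<in> Pin (Suc n) \<rightarrow>\<^sub>M borel" "Tm (Suc n) \<in> Pin (Suc n) \<rightarrow>\<^sub>M borel"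
    "st x0 n \<in> Pin (Suc n) \<rightarrow>\<^sub>M borel" "Measurable.pred (Pin (Suc n)) (Dn t n)" by auto
  show ?thesis unfolding Term_def[abs_def] by measurable
qed

lemma Rest_meas[measurable]:
  assumes [measurable]: "W \<in> borel_measurable borel"
  shows "Rest W c beta x0 t n \<in> borel_measurable (Pin n)"
proof -
  have [measurable]: "Tm n \<in> Pin n \<rightarrow>\<^sub>M borel"
    "st x0 n \<in> Pin n \<rightarrow>\<^sub>M borel" "Measurable.pred (Pin n) (Dn t n)" by auto
  show ?thesis unfolding Rest_def[abs_def] by measurable
qed

end

context cnp begin

lemma Key:
  assumes OS: "OneStep W c beta" and Wm[measurable]: "W \<in> borel_measurable borel"
    and Wnn: "\<And>p. 0 \<le> W p" and beta: "0 \<le> beta" and t: "0 \<le> t"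
  shows "(\<integral>\<^sup>+ y. Term W beta x0 t n y + Rest W c beta x0 t (Suc n) y \<partial>Pin (Suc n))
         \<le> (\<integral>\<^sup>+ y. Rest W c beta x0 t n y \<partial>Pin n)"
proof -
  interpret Q: prob_space Qm by (rule prob_Qm)
  interpret PS: product_sigma_finite "\<lambda>_. Qm"
    by (simp add: product_sigma_finite_def Q.sigma_finite_measure_axioms)
  have ins: "{..<Suc n} = insert n {..<n}" by auto
  have m: "(\<lambda>y. Term W beta x0 t n y + Rest W c beta x0 t (Suc n) y) \<in> borel_measurable (Pin (Suc n))"
    by measurable
  have "(\<integral>\<^sup>+ y. Term W beta x0 t n y + Rest W c beta x0 t (Suc n) y \<partial>Pin (Suc n))
     = (\<integral>\<^sup>+ y. (\<integral>\<^sup>+ z. Term W beta x0 t n (y(n := z)) + Rest W c beta x0 t (Suc n) (y(n := z)) \<partial>Qm) \<partial>Pin n)"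
    using m unfolding Pin_def ins by (intro PS.product_nn_integral_insert) auto
  also have "\<dots> \<le> (\<integral>\<^sup>+ y. Rest W c beta x0 t n y \<partial>Pin n)"
  proof (rule nn_integral_mono)
    fix y :: "nat \<Rightarrow> real \<times> 'b"
    define q where "q = st x0 n y"
    define tau where "tau = t - Tm n y"
    define A where "A z = ennreal (of_bool (tau < fst z) * W (cn_flow eta eta' q tau))" for z :: "real \<times> 'b"
    define B where "B z = ennreal (of_bool (fst z \<le> tau) * beta * exp (- c * (tau - fst z))
                        * W (jump (cn_flow eta eta' q (fst z)) (snd z)))" for z :: "real \<times> 'b"
    have Tm1: "Tm (Suc n) (y(n := z)) = Tm n y + fst z" for z by (simp add: Tm_Suc upd_Tm)
    have st1: "st x0 (Suc n) (y(n := z)) = jump (cn_flow eta eta' q (fst z)) (snd z)" for z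
      by (simp add: st_Suc upd_st q_def)
    show "(\<integral>\<^sup>+ z. Term W beta x0 t n (y(n := z)) + Rest W c beta x0 t (Suc n) (y(n := z)) \<partial>Qm)
          \<le> Rest W c beta x0 t n y"
    proof (cases "Dn t n y")
      case False
      then have "Term W beta x0 t n (y(n := z)) + Rest W c beta x0 t (Suc n) (y(n := z)) = 0" for z
        by (simp add: Term_def Rest_def upd_Dn Dn_Suc)
      then show ?thesis by simp
    next
      case True
      have tau0: "0 \<le> tau"
      proof (cases n)
        case 0 then show ?thesis using t by (simp add: tau_def Tm_0)
      next
        case (Suc m) then show ?thesis using True by (simp add: Dn_def tau_def)
      qed
      have eT: "Term W beta x0 t n (y(n := z)) = ennreal (beta ^ n) * A z" for z
      proof -
        have "Term W beta x0 t n (y(n := z)) = ennreal (beta ^ n * (of_bool (tau < fst z) * W (cn_flow eta eta' q tau)))"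
          unfolding Term_def upd_Dn upd_st upd_Tm Tm1 using True
          by (cases "tau < fst z") (auto simp: tau_def q_def)
        then show ?thesis unfolding A_def using beta Wnn by (simp add: ennreal_mult)
      qed
      have eR: "Rest W c beta x0 t (Suc n) (y(n := z)) = ennreal (beta ^ n) * B z" for z
      proof -
        have "Rest W c beta x0 t (Suc n) (y(n := z)) = ennreal (beta ^ n * (of_bool (fst z \<le> tau) * beta * exp (- c * (tau - fst z))
                        * W (jump (cn_flow eta eta' q (fst z)) (snd z))))"
          unfolding Rest_def Dn_Suc upd_Dn st1 Tm1 using True
          by (cases "fst z \<le> tau") (auto simp: tau_def algebra_simps)
        then show ?thesis unfolding B_def using beta Wnn by (simp add: ennreal_mult)
      qed
      have ABm: "(\<lambda>z. A z + B z) \<in> borel_measurable Qm"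
        unfolding measurable_cong_sets[OF sets_Qm refl] A_def B_def by measurable
      have "(\<integral>\<^sup>+ z. Term W beta x0 t n (y(n := z)) + Rest W c beta x0 t (Suc n) (y(n := z)) \<partial>Qm)
          = (\<integral>\<^sup>+ z. ennreal (beta ^ n) * (A z + B z) \<partial>Qm)"
        unfolding eT eR by (simp add: distrib_left)
      also have "\<dots> = ennreal (beta ^ n) * (\<integral>\<^sup>+ z. A z + B z \<partial>Qm)"
        by (rule nn_integral_cmult[OF ABm])
      also have "\<dots> \<le> ennreal (beta ^ n) * ennreal (exp (- c * tau) * W q)"
      proof (rule mult_left_mono)
        have "\<forall>q tau. 0 \<le> tau \<longrightarrow> (\<integral>\<^sup>+ z. A' q tau z + B' q tau z \<partial>Qm) \<le> ennreal (exp (- c * tau) * W q)"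
          if "A' = (\<lambda>q tau z. ennreal (of_bool (tau < fst z) * W (cn_flow eta eta' q tau)))"
            "B' = (\<lambda>q tau z. ennreal (of_bool (fst z \<le> tau) * beta * exp (- c * (tau - fst z))
                        * W (jump (cn_flow eta eta' q (fst z)) (snd z))))" for A' B'
          using OS unfolding OneStep_def that by simp
        from this[OF refl refl, rule_format, OF tau0, of q]
        show "(\<integral>\<^sup>+ z. A z + B z \<partial>Qm) \<le> ennreal (exp (- c * tau) * W q)"
          unfolding A_def B_def by simp
      qed simp
      also have "\<dots> = Rest W c beta x0 t n y"
        unfolding Rest_def using True beta Wnn by (simp add: ennreal_mult[symmetric] tau_def q_def mult_ac)
      finally show ?thesis .
    qed
  qed
  finally show ?thesis .
qed

lemma Sum_bound:
  assumes OS: "OneStep W c beta" and Wm[measurable]: "W \<in> borel_measurable borel"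
    and Wnn: "\<And>p. 0 \<le> W p" and beta: "0 \<le> beta" and t: "0 \<le> t"
  shows "(\<Sum>k<N. \<integral>\<^sup>+ y. Term W beta x0 t k y \<partial>Pin (Suc k)) + (\<integral>\<^sup>+ y. Rest W c beta x0 t N y \<partial>Pin N)
         \<le> ennreal (exp (- c * t) * W (x0, x0))"
proof (induction N)
  case 0
  have pr: "prob_space (Pin 0)" unfolding Pin_def by (intro prob_space_PiM prob_Qm)
  have "Rest W c beta x0 t 0 y = ennreal (exp (- c * t) * W (x0, x0))" for y
    by (simp add: Rest_def Dn_0 Tm_0 st_0)
  then show ?case using prob_space.emeasure_space_1[OF pr] by simp
next
  case (Suc N)
  have "(\<Sum>k<Suc N. \<integral>\<^sup>+ y. Term W beta x0 t k y \<partial>Pin (Suc k)) + (\<integral>\<^sup>+ y. Rest W c beta x0 t (Suc N) y \<partial>Pin (Suc N))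
     = (\<Sum>k<N. \<integral>\<^sup>+ y. Term W beta x0 t k y \<partial>Pin (Suc k))
       + (\<integral>\<^sup>+ y. Term W beta x0 t N y + Rest W c beta x0 t (Suc N) y \<partial>Pin (Suc N))"
    by (simp add: nn_integral_add add.assoc)
  also have "\<dots> \<le> (\<Sum>k<N. \<integral>\<^sup>+ y. Term W beta x0 t k y \<partial>Pin (Suc k)) + (\<integral>\<^sup>+ y. Rest W c beta x0 t N y \<partial>Pin N)"
    by (intro add_left_mono Key[OF OS Wm Wnn beta t])
  also have "\<dots> \<le> ennreal (exp (- c * t) * W (x0, x0))" by (rule Suc.IH)
  finally show ?case .
qed

end

context cnp begin

lemma Term_cong: "(\<And>i. i < Suc n \<Longrightarrow> y i = y' i) \<Longrightarrow> Term W beta x0 t n y = Term W beta x0 t n y'"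
proof -
  assume a: "\<And>i. i < Suc n \<Longrightarrow> y i = y' i"
  have "Dn t n y = Dn t n y'" "Tm (Suc n) y = Tm (Suc n) y'" "Tm n y = Tm n y'" "st x0 n y = st x0 n y'"
    using a by (auto intro!: Dn_cong Tm_cong st_cong)
  then show ?thesis by (simp add: Term_def)
qed

lemma Rest_cong: "(\<And>i. i < n \<Longrightarrow> y i = y' i) \<Longrightarrow> Rest W c beta x0 t n y = Rest W c beta x0 t n y'"
proof -
  assume a: "\<And>i. i < n \<Longrightarrow> y i = y' i"
  have "Dn t n y = Dn t n y'" "Tm n y = Tm n y'" "st x0 n y = st x0 n y'"
    using a by (auto intro!: Dn_cong Tm_cong st_cong)
  then show ?thesis by (simp add: Rest_def)
qed

lemma final:
  fixes M :: "'w measure" and E :: "nat \<Rightarrow> 'w \<Rightarrow> real" and xi :: "nat \<Rightarrow> 'w \<Rightarrow> 'b"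
    and x0 :: 'a and t :: real
  assumes M_prob: "prob_space M"
    and E_meas: "\<And>k. E k \<in> borel_measurable M"
    and xi_meas: "\<And>k. xi k \<in> measurable M P"
    and law: "\<And>k. distr M (borel \<Otimes>\<^sub>M P) (\<lambda>w. (E k w, xi k w))
                    = density lborel (exponential_density 1) \<Otimes>\<^sub>M P"
    and indep: "prob_space.indep_vars M (\<lambda>_. borel \<Otimes>\<^sub>M P) (\<lambda>k w. (E k w, xi k w)) UNIV"
    and t_nonneg: "t \<ge> 0"
  shows "(\<integral>\<^sup>+ w. ennreal (f (fst (cn_process eta eta' gamma gamma' G x0
                                   (\<lambda>k. E k w) (\<lambda>k. xi k w) t)) - fstar) \<partial>M)
         \<le> ennreal (exp (- (mu * gamma / 2) * t) * (f x0 - fstar))"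
proof -
  interpret M: prob_space M by (rule M_prob)
  define Z where "Z w = (\<lambda>i. (E i w, xi i w))" for w
  define Y where "Y n w = (\<lambda>i\<in>{..<n}. (E i w, xi i w))" for n w
  have Zm: "(\<lambda>w. (E i w, xi i w)) \<in> M \<rightarrow>\<^sub>M Qm" for i
    unfolding measurable_cong_sets[OF refl sets_Qm] by (intro measurable_Pair E_meas xi_meas)
  have Ym: "Y n \<in> M \<rightarrow>\<^sub>M Pin n" for n
    unfolding Y_def Pin_def by (rule measurable_restrict) (rule Zm)
  have lawn: "distr M (Pin (Suc n)) (Y (Suc n)) = Pin (Suc n)" for n
  proof -
    have rv: "(\<lambda>w. (E i w, xi i w)) \<in> M \<rightarrow>\<^sub>M borel \<Otimes>\<^sub>M P" for i
      by (intro measurable_Pair E_meas xi_meas)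
    have ind: "M.indep_vars (\<lambda>_. borel \<Otimes>\<^sub>M P) (\<lambda>k w. (E k w, xi k w)) {..<Suc n}"
      by (rule M.indep_vars_subset[OF indep]) auto
    have "distr M (\<Pi>\<^sub>M i\<in>{..<Suc n}. borel \<Otimes>\<^sub>M P) (\<lambda>x. \<lambda>i\<in>{..<Suc n}. (E i x, xi i x))
        = (\<Pi>\<^sub>M i\<in>{..<Suc n}. distr M (borel \<Otimes>\<^sub>M P) (\<lambda>w. (E i w, xi i w)))"
      using M.indep_vars_iff_distr_eq_PiM[where I="{..<Suc n}" and M'="\<lambda>_. borel \<Otimes>\<^sub>M P" and X="\<lambda>k w. (E k w, xi k w)", OF _ rv] ind
      by auto
    also have "\<dots> = Pin (Suc n)" unfolding Pin_def law Qm_def ..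
    finally have e: "distr M (\<Pi>\<^sub>M i\<in>{..<Suc n}. borel \<Otimes>\<^sub>M P) (\<lambda>x. \<lambda>i\<in>{..<Suc n}. (E i x, xi i x)) = Pin (Suc n)" .
    have "distr M (Pin (Suc n)) (Y (Suc n)) = distr M (\<Pi>\<^sub>M i\<in>{..<Suc n}. borel \<Otimes>\<^sub>M P) (\<lambda>x. \<lambda>i\<in>{..<Suc n}. (E i x, xi i x))"
      unfolding Pin_def Y_def by (intro distr_cong refl sets_PiM_cong) (auto simp: sets_Qm)
    then show ?thesis using e by simp
  qed
  have transfer: "(\<integral>\<^sup>+ w. h (Y (Suc n) w) \<partial>M) = (\<integral>\<^sup>+ y. h y \<partial>Pin (Suc n))"
    if hm: "h \<in> borel_measurable (Pin (Suc n))" for h n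
  proof -
    have "(\<integral>\<^sup>+ y. h y \<partial>Pin (Suc n)) = (\<integral>\<^sup>+ y. h y \<partial>distr M (Pin (Suc n)) (Y (Suc n)))" by (simp add: lawn)
    also have "\<dots> = (\<integral>\<^sup>+ w. h (Y (Suc n) w) \<partial>M)"
      by (rule nn_integral_distr[OF Ym]) (simp add: lawn hm)
    finally show ?thesis by simp
  qed
  have YZ: "Y n w i = Z w i" if "i < n" for n w i using that by (simp add: Y_def Z_def)
  define Inf where "Inf = {w \<in> space M. \<forall>k. Tm (Suc k) (Z w) \<le> t}"
  have TmZ: "Tm k (Z w) = (\<Sum>i<k. E i w)" for k w by (simp add: Tm_def Z_def cn_time_def)
  have Inf_sets: "Inf \<in> sets M"
  proof -
    have [measurable]: "E i \<in> borel_measurable M" for i by (rule E_meas)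
    have "Inf = {w \<in> space M. \<forall>k. (\<Sum>i<Suc k. E i w) \<le> t}" unfolding Inf_def TmZ ..
    also have "\<dots> \<in> sets M"
    proof (intro sets.sets_Collect_countable_All)
      fix k
      have "(\<lambda>w. \<Sum>i<Suc k. E i w) \<in> borel_measurable M" by (intro borel_measurable_sum E_meas)
      then show "{w \<in> space M. (\<Sum>i<Suc k. E i w) \<le> t} \<in> sets M" by measurable
    qed
    finally show ?thesis .
  qed
  have Inf_le: "measure M Inf \<le> exp t / 2 ^ Suc n" for n
  proof -
    have OS1: "OneStep (\<lambda>_. 1) (-1) 2" by (rule OneStep_1)
    have sb0: "(\<Sum>k<Suc n. \<integral>\<^sup>+ y. Term (\<lambda>_. 1) 2 x0 t k y \<partial>Pin (Suc k)) + (\<integral>\<^sup>+ y. Rest (\<lambda>_. 1) (-1) 2 x0 t (Suc n) y \<partial>Pin (Suc n))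
         \<le> ennreal (exp (- (-1) * t) * 1)"
      by (rule Sum_bound[OF OS1]) (auto simp: t_nonneg)
    have "(\<integral>\<^sup>+ y. Rest (\<lambda>_. 1) (-1) 2 x0 t (Suc n) y \<partial>Pin (Suc n))
        \<le> (\<Sum>k<Suc n. \<integral>\<^sup>+ y. Term (\<lambda>_. 1) 2 x0 t k y \<partial>Pin (Suc k)) + (\<integral>\<^sup>+ y. Rest (\<lambda>_. 1) (-1) 2 x0 t (Suc n) y \<partial>Pin (Suc n))"
      by (intro add_increasing zero_le order_refl)
    from order_trans[OF this sb0] have sb: "(\<integral>\<^sup>+ y. Rest (\<lambda>_. 1) (-1) 2 x0 t (Suc n) y \<partial>Pin (Suc n)) \<le> ennreal (exp t)"
      by simp
    have "ennreal (2 ^ Suc n) * emeasure M Inf = (\<integral>\<^sup>+ w. ennreal (2 ^ Suc n) * indicator Inf w \<partial>M)"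
      by (rule nn_integral_cmult_indicator[OF Inf_sets, symmetric])
    also have "\<dots> \<le> (\<integral>\<^sup>+ w. Rest (\<lambda>_. 1) (-1) 2 x0 t (Suc n) (Y (Suc n) w) \<partial>M)"
    proof (rule nn_integral_mono)
      fix w assume "w \<in> space M"
      show "ennreal (2 ^ Suc n) * indicator Inf w \<le> Rest (\<lambda>_. 1) (-1) 2 x0 t (Suc n) (Y (Suc n) w)"
      proof (cases "w \<in> Inf")
        case True
        have eq: "Rest (\<lambda>_. 1) (-1) 2 x0 t (Suc n) (Y (Suc n) w) = Rest (\<lambda>_. 1) (-1) 2 x0 t (Suc n) (Z w)"
          by (rule Rest_cong) (simp add: YZ)
        have D: "Dn t (Suc n) (Z w)" using True by (simp add: Inf_def Dn_def)
        have "Tm (Suc n) (Z w) \<le> t" using True by (simp add: Inf_def)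
        then have "1 \<le> exp (t - Tm (Suc n) (Z w))" by simp
        then have "2 ^ Suc n * 1 \<le> 2 ^ Suc n * exp (t - Tm (Suc n) (Z w))"
          by (intro mult_left_mono) auto
        then have r: "ennreal (2 ^ Suc n) \<le> Rest (\<lambda>_. 1) (-1) 2 x0 t (Suc n) (Z w)"
          unfolding Rest_def using D by (auto intro!: ennreal_leI)
        show ?thesis using r eq True by simp
      qed simp
    qed
    also have "\<dots> = (\<integral>\<^sup>+ y. Rest (\<lambda>_. 1) (-1) 2 x0 t (Suc n) y \<partial>Pin (Suc n))"
      by (rule transfer) measurable
    also have "\<dots> \<le> ennreal (exp t)" by (rule sb)
    finally have "ennreal (2 ^ Suc n) * emeasure M Inf \<le> ennreal (exp t)" .
    then have "ennreal (2 ^ Suc n * measure M Inf) \<le> ennreal (exp t)"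
      by (simp add: M.emeasure_eq_measure ennreal_mult)
    then have "2 ^ Suc n * measure M Inf \<le> exp t" by (simp add: ennreal_le_iff)
    then show ?thesis by (simp add: field_simps del: power_Suc)
  qed
  have Inf_null: "emeasure M Inf = 0"
  proof -
    note Inf_le
    moreover have "(\<lambda>n. exp t / 2 ^ Suc n) \<longlonglongrightarrow> 0"
    proof -
      have "(\<lambda>n. exp t / (2::real) ^ n) \<longlonglongrightarrow> 0"
        by (intro tendsto_divide_0[OF tendsto_const] filterlim_realpow_sequentially_gt1) simp
      then show ?thesis by (rule LIMSEQ_Suc)
    qed
    ultimately have "measure M Inf \<le> 0"
      using LIMSEQ_le_const[of "\<lambda>n. exp t / 2 ^ Suc n" 0 "measure M Inf"] by blast
    then show ?thesis by (simp add: M.emeasure_eq_measure measure_nonneg antisym)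
  qed
  define X where "X w = cn_process eta eta' gamma gamma' G x0 (\<lambda>k. E k w) (\<lambda>k. xi k w) t" for w
  have sumeq: "ennreal (V (X w)) = (\<Sum>k. Term V 1 x0 t k (Z w))" if "w \<in> space M" "w \<notin> Inf" for w
  proof -
    have ex: "\<exists>k. t < Tm (Suc k) (Z w)" using that by (auto simp: Inf_def not_le)
    define k0 where "k0 = (LEAST k. t < Tm (Suc k) (Z w))"
    have k0: "t < Tm (Suc k0) (Z w)" unfolding k0_def by (rule LeastI_ex[OF ex])
    have k0l: "\<not> t < Tm (Suc i) (Z w)" if "i < k0" for i
      using not_less_Least[OF that[unfolded k0_def]] .
    have Dk0: "Dn t k0 (Z w)" using k0l by (auto simp: Dn_def not_less)
    have Xe: "X w = cn_flow eta eta' (st x0 k0 (Z w)) (t - Tm k0 (Z w))"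
      by (simp add: X_def cn_process_def k0_def st_def Tm_def Z_def Let_def)
    have single: "Term V 1 x0 t k (Z w) = (if k = k0 then ennreal (V (X w)) else 0)" for k
    proof (cases "k = k0")
      case True then show ?thesis using Dk0 k0 Xe by (simp add: Term_def)
    next
      case False
      show ?thesis
      proof (cases "k < k0")
        case True then show ?thesis using k0l[OF True] False by (simp add: Term_def)
      next
        case False2: False
        then have "k0 < k" using False by simp
        then have "\<not> Dn t k (Z w)" using k0 by (auto simp: Dn_def)
        then show ?thesis using False by (simp add: Term_def)
      qed
    qed
    have "(\<lambda>k. Term V 1 x0 t k (Z w)) sums ennreal (V (X w))"
      unfolding single using sums_single[of k0 "\<lambda>_. ennreal (V (X w))"] by simp
    then show ?thesis by (simp add: sums_unique)
  qed
  have AEsum: "AE w in M. ennreal (V (X w)) = (\<Sum>k. Term V 1 x0 t k (Y (Suc k) w))"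
  proof -
    have "AE w in M. w \<notin> Inf"
      using Inf_null Inf_sets by (intro AE_I[where N=Inf]) auto
    then show ?thesis
    proof (rule AE_mp, intro AE_I2 impI)
      fix w assume w: "w \<in> space M" "w \<notin> Inf"
      have "Term V 1 x0 t k (Y (Suc k) w) = Term V 1 x0 t k (Z w)" for k
        by (rule Term_cong) (simp add: YZ)
      then show "ennreal (V (X w)) = (\<Sum>k. Term V 1 x0 t k (Y (Suc k) w))" using sumeq[OF w] by simp
    qed
  qed
  have "(\<integral>\<^sup>+ w. ennreal (f (fst (X w)) - fstar) \<partial>M) \<le> (\<integral>\<^sup>+ w. ennreal (V (X w)) \<partial>M)"
    by (intro nn_integral_mono ennreal_leI) (simp add: V_def)
  also have "\<dots> = (\<integral>\<^sup>+ w. (\<Sum>k. Term V 1 x0 t k (Y (Suc k) w)) \<partial>M)"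
    by (rule nn_integral_cong_AE[OF AEsum])
  also have "\<dots> = (\<Sum>k. \<integral>\<^sup>+ w. Term V 1 x0 t k (Y (Suc k) w) \<partial>M)"
  proof (rule nn_integral_suminf)
    fix k
    have [measurable]: "Y (Suc k) \<in> M \<rightarrow>\<^sub>M Pin (Suc k)" by (rule Ym)
    show "(\<lambda>w. Term V 1 x0 t k (Y (Suc k) w)) \<in> borel_measurable M" by measurable
  qed
  also have "\<dots> = (\<Sum>k. \<integral>\<^sup>+ y. Term V 1 x0 t k y \<partial>Pin (Suc k))"
    by (intro suminf_cong transfer) measurable
  also have "\<dots> \<le> ennreal (exp (- cc * t) * V (x0, x0))"
  proof (unfold suminf_eq_SUP, rule SUP_least)
    fix N
    show "(\<Sum>k<N. \<integral>\<^sup>+ y. Term V 1 x0 t k y \<partial>Pin (Suc k)) \<le> ennreal (exp (- cc * t) * V (x0, x0))"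
    proof -
      have "(\<Sum>k<N. \<integral>\<^sup>+ y. Term V 1 x0 t k y \<partial>Pin (Suc k))
          \<le> (\<Sum>k<N. \<integral>\<^sup>+ y. Term V 1 x0 t k y \<partial>Pin (Suc k)) + (\<integral>\<^sup>+ y. Rest V cc 1 x0 t N y \<partial>Pin N)"
        by (intro add_increasing2 zero_le order_refl)
      also have "\<dots> \<le> ennreal (exp (- cc * t) * V (x0, x0))"
        by (rule Sum_bound[OF OneStep_V V_meas V_nonneg]) (auto simp: t_nonneg)
      finally show ?thesis .
    qed
  qed
  also have "exp (- cc * t) * V (x0, x0) = exp (- (mu * gamma / 2) * t) * (f x0 - fstar)"
    by (simp add: cc_def V_def)
  finally show ?thesis unfolding X_def .
qed

end

theorem proposition3:
  fixes f :: "'a::euclidean_space \<Rightarrow> real"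
    and gradf :: "'a \<Rightarrow> 'a"
    and fstar L mu rho gamma gamma' eta eta' :: real
    and P :: "'b measure"
    and G :: "'a \<Rightarrow> 'b \<Rightarrow> 'a"
    and M :: "'w measure"
    and E :: "nat \<Rightarrow> 'w \<Rightarrow> real"
    and xi :: "nat \<Rightarrow> 'w \<Rightarrow> 'b"
    and x0 :: 'a
    and t :: real
  assumes grad: "\<And>x. (f has_derivative (\<lambda>h. gradf x \<bullet> h)) (at x)"
    and fmin: "\<And>x. fstar \<le> f x" and fmin_att: "\<exists>x. f x = fstar"
    and L_pos: "L > 0" and mu_pos: "mu > 0" and rho_ge: "rho \<ge> 1"
    and smooth: "\<And>x y. f x - f y - gradf y \<bullet> (x - y) \<le> L / 2 * (norm (x - y))\<^sup>2"
    and PL: "\<And>x. (norm (gradf x))\<^sup>2 \<ge> 2 * mu * (f x - fstar)"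
    and P_prob: "prob_space P"
    and G_meas: "(\<lambda>(x, s). G x s) \<in> borel_measurable (borel \<Otimes>\<^sub>M P)"
    and unbiased: "\<And>x. integrable P (G x) \<and> (\<integral>s. G x s \<partial>P) = gradf x"
    and SGC: "\<And>x. (\<integral>\<^sup>+ s. ennreal ((norm (G x s))\<^sup>2) \<partial>P) \<le> ennreal (rho * (norm (gradf x))\<^sup>2)"
    and M_prob: "prob_space M"
    and E_meas: "\<And>k. E k \<in> borel_measurable M"
    and xi_meas: "\<And>k. xi k \<in> measurable M P"
    and law: "\<And>k. distr M (borel \<Otimes>\<^sub>M P) (\<lambda>w. (E k w, xi k w))
                    = density lborel (exponential_density 1) \<Otimes>\<^sub>M P"
    and indep: "prob_space.indep_vars M (\<lambda>_. borel \<Otimes>\<^sub>M P) (\<lambda>k w. (E k w, xi k w)) UNIV"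
    and gamma_pos: "0 < gamma" and gamma_le: "gamma \<le> 1 / (rho * L)"
    and gamma'_def: "gamma' = gamma + sqrt (gamma / (2 * rho))"
    and eta_def: "eta = sqrt (gamma / (2 * rho))"
    and eta'_def: "eta' = mu * gamma / 2 - sqrt (gamma / (2 * rho))"
    and t_nonneg: "t \<ge> 0"
  shows "(\<integral>\<^sup>+ w. ennreal (f (fst (cn_process eta eta' gamma gamma' G x0
                                   (\<lambda>k. E k w) (\<lambda>k. xi k w) t)) - fstar) \<partial>M)
         \<le> ennreal (exp (- (mu * gamma / 2) * t) * (f x0 - fstar))"
proof -
  interpret cnp f gradf fstar L mu rho gamma gamma' eta eta' P G
    by (rule cnp.intro; fact)
  show ?thesis by (rule final[OF M_prob E_meas xi_meas law indep t_nonneg])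
qed

end
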